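(* If $pn\ge 10^{17}$, then with probability $1-o(n^{-2})$ (as $n\to\infty$) the random graph $G=G(n,p)$ has the following property: for every $U\subseteq V(G)$ with $|U|\ge 4n/10^6$, if there is a subgraph $H\subseteq G$ with $V(H)=U$ and $e(H)\le pn^2/10^{17}$ which is a $(|U|,2)$-expander, then $G[U]$ is Hamiltonian.
   Context: $G(n,p)$ is the binomial random graph on $[n]$. A graph $H$ with $N$ vertices is an $(N,2)$-expander if every $A\subseteq V(H)$ with $|A|\le N/4$ satisfies $|N_H(A)|\ge 2|A|$, where $N_H(A)=\big(\bigcup_{a\in A}N_H(a)\big)\setminus A$. $e(H)$ is the number of edges of $H$. *)

theory Defs
  imports Complex_Main "HOL-Library.Landau_Symbols"
begin

text \<open>Simple graphs on vertex set [n] = {0..<n}, represented by their edge sets: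
  an edge is a 2-element set {u,v} with u \<noteq> v.\<close>

definition all_edges :: "nat \<Rightarrow> nat set set" where
  "all_edges n = {e. \<exists>u v. u < n \<and> v < n \<and> u \<noteq> v \<and> e = {u, v}}"

definition gnp_prob :: "nat \<Rightarrow> real \<Rightarrow> (nat set set \<Rightarrow> bool) \<Rightarrow> real" where
  "gnp_prob n p P =
     (\<Sum>E\<in>Pow (all_edges n).
        (if P E then p ^ card E * (1 - p) ^ (card (all_edges n) - card E) else 0))"

definition nbhd :: "nat set set \<Rightarrow> nat set \<Rightarrow> nat set" where
  "nbhd F A = (\<Union>a\<in>A. {b. {a, b} \<in> F}) - A"

text \<open>(N,2)-expander: graph H with vertex set U (|U| = N) and edge set F.\<close>

definition is_expander2 :: "nat set \<Rightarrow> nat set set \<Rightarrow> bool" where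
  "is_expander2 U F \<longleftrightarrow>
     (\<forall>A. A \<subseteq> U \<and> real (card A) \<le> real (card U) / 4
          \<longrightarrow> card (nbhd F A) \<ge> 2 * card A)"

definition subgraph_on :: "nat set set \<Rightarrow> nat set \<Rightarrow> nat set set \<Rightarrow> bool" where
  "subgraph_on E U F \<longleftrightarrow> F \<subseteq> E \<and> (\<forall>e\<in>F. e \<subseteq> U)"

text \<open>The induced subgraph G[U] is Hamiltonian: a cycle (of length at least 3)
  through all vertices of U, using edges of G (which then lie inside U).\<close>

definition hamiltonian_on :: "nat set set \<Rightarrow> nat set \<Rightarrow> bool" where
  "hamiltonian_on E U \<longleftrightarrow>
     (\<exists>vs. distinct vs \<and> set vs = U \<and> length vs \<ge> 3 \<and>
        (\<forall>i < length vs - 1. {vs ! i, vs ! (i + 1)} \<in> E) \<and>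
        {last vs, hd vs} \<in> E)"

definition lemma_property :: "nat \<Rightarrow> real \<Rightarrow> nat set set \<Rightarrow> bool" where
  "lemma_property n p E \<longleftrightarrow>
     (\<forall>U. U \<subseteq> {..<n} \<and> real (card U) \<ge> 4 * real n / 10^6 \<longrightarrow>
        (\<exists>F. subgraph_on E U F \<and> real (card F) \<le> p * real n ^ 2 / 10^17
              \<and> is_expander2 U F) \<longrightarrow> hamiltonian_on E U)"

end

theory Submission
  imports Defs "HOL-Real_Asymp.Real_Asymp"
begin


fun es :: "'a list \<Rightarrow> 'a set set" where
  "es [] = {}" | "es [x] = {}" | "es (x#y#xs) = insert {x,y} (es (y#xs))"

lemma es_Cons: "xs \<noteq> [] \<Longrightarrow> es (x#xs) = insert {x, hd xs} (es xs)"
  by (cases xs) auto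

lemma es_append: "A \<noteq> [] \<Longrightarrow> B \<noteq> [] \<Longrightarrow> es (A@B) = es A \<union> es B \<union> {{last A, hd B}}"
proof (induction A rule: es.induct)
  case 1 then show ?case by simp
next
  case (2 x) then show ?case by (simp add: es_Cons)
next
  case (3 x y xs) then show ?case by auto
qed

lemma es_append_sub: "es (A@B) \<subseteq> es A \<union> es B \<union> {{last A, hd B}}"
  by (cases "A = []"; cases "B = []") (auto simp: es_append)

lemma es_append_sup: "es A \<union> es B \<subseteq> es (A@B)"
  by (cases "A = []"; cases "B = []") (auto simp: es_append)

lemma es_snoc: "A \<noteq> [] \<Longrightarrow> es (A@[b]) = insert {last A, b} (es A)"
  by (simp add: es_append)

lemma es_rev: "es (rev xs) = es xs"
proof (induction xs)
  case Nil then show ?case by simp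
next
  case (Cons x xs)
  show ?case
  proof (cases "xs = []")
    case True then show ?thesis by simp
  next
    case False
    have "es (rev (x#xs)) = insert {last (rev xs), x} (es (rev xs))"
      using False by (simp add: es_snoc)
    also have "\<dots> = insert {x, hd xs} (es xs)" using False Cons
      by (simp add: last_rev insert_commute)
    finally show ?thesis using False by (simp add: es_Cons)
  qed
qed

lemma es_nth_iff: "e \<in> es xs \<longleftrightarrow> (\<exists>k. Suc k < length xs \<and> e = {xs!k, xs!Suc k})"
proof (induction xs rule: es.induct)
  case (3 x y xs)
  show ?case
  proof
    assume "e \<in> es (x#y#xs)"
    then consider "e = {x,y}" | "e \<in> es (y#xs)" by auto
    then show "\<exists>k. Suc k < length (x#y#xs) \<and> e = {(x#y#xs)!k, (x#y#xs)!Suc k}"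
    proof cases
      case 1 then show ?thesis by (intro exI[of _ 0]) auto
    next
      case 2
      then obtain k where "Suc k < length (y#xs)" "e = {(y#xs)!k, (y#xs)!Suc k}" using 3 by blast
      then show ?thesis by (intro exI[of _ "Suc k"]) auto
    qed
  next
    assume "\<exists>k. Suc k < length (x#y#xs) \<and> e = {(x#y#xs)!k, (x#y#xs)!Suc k}"
    then obtain k where k: "Suc k < length (x#y#xs)" "e = {(x#y#xs)!k, (x#y#xs)!Suc k}" by blast
    show "e \<in> es (x#y#xs)"
    proof (cases k)
      case 0 then show ?thesis using k by simp
    next
      case (Suc j)
      then have "e \<in> es (y#xs)" using 3 k by auto
      then show ?thesis by simp
    qed
  qed
qed auto

lemma es_nth: "Suc k < length xs \<Longrightarrow> {xs!k, xs!Suc k} \<in> es xs"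
  using es_nth_iff by blast

lemma es_subset_set: "e \<in> es xs \<Longrightarrow> e \<subseteq> set xs"
  by (auto simp: es_nth_iff)

lemma es_finite: "finite (es xs)"
  by (induction xs rule: es.induct) auto

lemma es_card: "card (es xs) \<le> length xs"
  by (induction xs rule: es.induct) (auto intro: le_trans[OF card_insert_le_m1])

lemma es_idx_all: "(\<forall>i < length vs - 1. {vs ! i, vs ! (i + 1)} \<in> E) \<longleftrightarrow> es vs \<subseteq> E"
proof
  assume H: "\<forall>i < length vs - 1. {vs ! i, vs ! (i + 1)} \<in> E"
  show "es vs \<subseteq> E"
  proof
    fix e assume "e \<in> es vs"
    then obtain k where "Suc k < length vs" "e = {vs!k, vs!Suc k}" by (auto simp: es_nth_iff)
    then show "e \<in> E" using H by auto
  qed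
next
  assume "es vs \<subseteq> E"
  then show "\<forall>i < length vs - 1. {vs ! i, vs ! (i + 1)} \<in> E"
    using es_nth[of _ vs] by (metis Suc_eq_plus1 less_diff_conv subsetD)
qed

definition nb :: "'a list \<Rightarrow> 'a \<Rightarrow> 'a set" where
  "nb xs x = {y. {x,y} \<in> es xs}"

lemma nb_idx:
  assumes "distinct xs" "j < length xs" "y \<in> nb xs (xs!j)"
  shows "(Suc j < length xs \<and> y = xs!Suc j) \<or> (0 < j \<and> y = xs!(j-1))"
proof -
  obtain k where k: "Suc k < length xs" "{xs!j, y} = {xs!k, xs!Suc k}"
    using assms(3) unfolding nb_def es_nth_iff by blast
  then consider "xs!j = xs!k \<and> y = xs!Suc k" | "xs!j = xs!Suc k \<and> y = xs!k"
    by (auto simp: doubleton_eq_iff)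
  then show ?thesis
  proof cases
    case 1
    then have "j = k" using assms k nth_eq_iff_index_eq by fastforce
    then show ?thesis using 1 k by auto
  next
    case 2
    then have "j = Suc k" using assms k nth_eq_iff_index_eq by fastforce
    then show ?thesis using 2 k by auto
  qed
qed

lemma nb_sub: "nb xs x \<subseteq> set xs"
proof
  fix y assume "y \<in> nb xs x"
  then have "{x,y} \<in> es xs" by (simp add: nb_def)
  then have "{x,y} \<subseteq> set xs" by (rule es_subset_set)
  then show "y \<in> set xs" by simp
qed

lemma nb_not_in: "x \<notin> set xs \<Longrightarrow> nb xs x = {}"
proof -
  assume a: "x \<notin> set xs"
  { fix y assume "y \<in> nb xs x"
    then have "{x,y} \<in> es xs" by (simp add: nb_def)
    then have "{x,y} \<subseteq> set xs" by (rule es_subset_set)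
    then have False using a by simp }
  then show ?thesis by blast
qed

lemma nb_card2:
  assumes "distinct xs" shows "card (nb xs x) \<le> 2"
proof (cases "x \<in> set xs")
  case False then show ?thesis by (simp add: nb_not_in)
next
  case True
  then obtain j where j: "j < length xs" "x = xs!j" by (metis in_set_conv_nth)
  have "nb xs x \<subseteq> {xs!Suc j, xs!(j-1)}" using nb_idx[OF assms j(1)] j by blast
  moreover have "card {xs!Suc j, xs!(j-1)} \<le> 2" by (simp add: card_insert_if)
  ultimately show ?thesis using card_mono[of "{xs!Suc j, xs!(j-1)}" "nb xs x"] by simp
qed

lemma nb_card_hd:
  assumes "distinct xs" "xs \<noteq> []" shows "card (nb xs (hd xs)) \<le> 1"
proof -
  have "nb xs (hd xs) \<subseteq> {xs!1}" using nb_idx[OF assms(1), of 0] assms by (auto simp: hd_conv_nth)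
  moreover have "card {xs!1} = 1" by simp
  ultimately show ?thesis using card_mono[of "{xs!1}" "nb xs (hd xs)"] by simp
qed

lemma nb_rev: "nb (rev xs) x = nb xs x"
  by (simp add: nb_def es_rev)

lemma nb_card_last:
  assumes "distinct xs" "xs \<noteq> []" shows "card (nb xs (last xs)) \<le> 1"
  using nb_card_hd[of "rev xs"] assms by (simp add: nb_rev hd_rev)



definition pth :: "'a set \<Rightarrow> 'a set set \<Rightarrow> 'a list \<Rightarrow> bool" where
  "pth U G vs \<longleftrightarrow> vs \<noteq> [] \<and> distinct vs \<and> set vs \<subseteq> U \<and> es vs \<subseteq> G"

definition lp :: "'a set \<Rightarrow> 'a set set \<Rightarrow> nat" where
  "lp U G = Max (length ` {vs. pth U G vs})"

lemma pth_len: "finite U \<Longrightarrow> pth U G vs \<Longrightarrow> length vs \<le> card U"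
  unfolding pth_def by (metis card_mono distinct_card)

lemma pth_finite: assumes "finite U" shows "finite {vs. pth U G vs}"
proof -
  have "{vs. pth U G vs} \<subseteq> {xs. set xs \<subseteq> U \<and> length xs \<le> card U}"
    using pth_len[OF assms] by (auto simp: pth_def)
  moreover have "finite {xs. set xs \<subseteq> U \<and> length xs \<le> card U}"
    using finite_lists_length_le[OF assms] by simp
  ultimately show ?thesis by (rule finite_subset)
qed

lemma pth_le_lp: "finite U \<Longrightarrow> pth U G vs \<Longrightarrow> length vs \<le> lp U G"
  unfolding lp_def using pth_finite by (intro Max_ge) auto

lemma lp_exists:
  assumes "finite U" "U \<noteq> {}" shows "\<exists>vs. pth U G vs \<and> length vs = lp U G"
proof -
  obtain u where "u \<in> U" using assms by blast
  then have "pth U G [u]" by (simp add: pth_def)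
  then have ne: "length ` {vs. pth U G vs} \<noteq> {}" by blast
  have "lp U G \<in> length ` {vs. pth U G vs}"
    unfolding lp_def using pth_finite[OF assms(1)] ne by (intro Max_in) auto
  then show ?thesis by auto
qed

lemma lp_mono:
  assumes "finite U" "U \<noteq> {}" "G \<subseteq> G'" shows "lp U G \<le> lp U G'"
proof -
  obtain vs where "pth U G vs" "length vs = lp U G" using lp_exists[OF assms(1,2)] by blast
  then have "pth U G' vs" using assms(3) by (auto simp: pth_def)
  then show ?thesis using pth_le_lp[OF assms(1)] \<open>length vs = lp U G\<close> by metis
qed

definition rot :: "'a list \<Rightarrow> nat \<Rightarrow> 'a list" where
  "rot Q i = take (Suc i) Q @ rev (drop (Suc i) Q)"

lemma last_take_Suc: "k < length xs \<Longrightarrow> last (take (Suc k) xs) = xs!k"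
  by (simp add: take_Suc_conv_app_nth)

lemma rot_facts:
  assumes "Suc i < length Q"
  shows "hd (rot Q i) = hd Q" "last (rot Q i) = Q!Suc i" "set (rot Q i) = set Q"
    "length (rot Q i) = length Q" "distinct Q \<Longrightarrow> distinct (rot Q i)"
    "es (rot Q i) = es (take (Suc i) Q) \<union> es (drop (Suc i) Q) \<union> {{Q!i, last Q}}"
    "es Q = es (take (Suc i) Q) \<union> es (drop (Suc i) Q) \<union> {{Q!i, Q!Suc i}}"
proof -
  have t: "take (Suc i) Q \<noteq> []" using assms by (cases Q) auto
  have d: "drop (Suc i) Q \<noteq> []" using assms by simp
  show "hd (rot Q i) = hd Q" using t by (simp add: rot_def)
  show "last (rot Q i) = Q!Suc i" using d assms by (simp add: rot_def last_rev hd_drop_conv_nth)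
  show "set (rot Q i) = set Q" unfolding rot_def
    by (metis append_take_drop_id set_append set_rev)
  show "length (rot Q i) = length Q" unfolding rot_def using assms by simp
  show "distinct Q \<Longrightarrow> distinct (rot Q i)" unfolding rot_def
    by (metis append_take_drop_id distinct_append distinct_rev set_rev)
  show "es (rot Q i) = es (take (Suc i) Q) \<union> es (drop (Suc i) Q) \<union> {{Q!i, last Q}}"
    unfolding rot_def using t d assms
    by (simp add: es_append es_rev hd_rev last_take_Suc)
  have "es Q = es (take (Suc i) Q @ drop (Suc i) Q)" by simp
  also have "\<dots> = es (take (Suc i) Q) \<union> es (drop (Suc i) Q) \<union> {{Q!i, Q!Suc i}}"
    using es_append[OF t d] assms by (simp add: last_take_Suc hd_drop_conv_nth del: append_take_drop_id)
  finally show "es Q = es (take (Suc i) Q) \<union> es (drop (Suc i) Q) \<union> {{Q!i, Q!Suc i}}" .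
qed

inductive_set rots :: "'a set set \<Rightarrow> 'a list \<Rightarrow> 'a list set" for G P where
  base: "P \<in> rots G P"
| step: "Q \<in> rots G P \<Longrightarrow> Suc i < length Q \<Longrightarrow> {last Q, Q!i} \<in> G \<Longrightarrow> rot Q i \<in> rots G P"

lemma rots_inv:
  assumes "pth U G P" "Q \<in> rots G P"
  shows "pth U G Q \<and> hd Q = hd P \<and> set Q = set P \<and> length Q = length P"
  using assms(2)
proof induction
  case base then show ?case using assms(1) by simp
next
  case (step Q i)
  have "es (rot Q i) \<subseteq> G"
  proof -
    have "es (take (Suc i) Q) \<subseteq> G" "es (drop (Suc i) Q) \<subseteq> G"
      using step rot_facts(7)[OF step(2)] by (auto simp: pth_def)
    moreover have "{Q!i, last Q} \<in> G" using step(3) by (simp add: insert_commute)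
    ultimately show ?thesis using rot_facts(6)[OF step(2)] by simp
  qed
  moreover have "rot Q i \<noteq> []" using rot_facts(4)[OF step(2)] step(2) by auto
  ultimately show ?case using step rot_facts[OF step(2)] by (auto simp: pth_def)
qed

lemma rots_inv1:
  assumes "Q \<in> rots G P" "e \<in> es P"
  shows "e \<in> es Q \<or> (\<exists>z \<in> last ` rots G P. z \<in> e)"
  using assms(1)
proof induction
  case base then show ?case using assms(2) by simp
next
  case (step Q i)
  show ?case
  proof (cases "e \<in> es Q")
    case False then show ?thesis using step by simp
  next
    case True
    then have "e \<in> es (rot Q i) \<or> e = {Q!i, Q!Suc i}"
      using rot_facts(6,7)[OF step(2)] by auto
    moreover have "Q!Suc i \<in> last ` rots G P"
      using rots.step[OF step(1,2,3)] rot_facts(2)[OF step(2)] by (metis image_eqI)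
    ultimately show ?thesis by auto
  qed
qed

lemma posa_nb:
  assumes fin: "finite U" and edg: "\<forall>e\<in>G. e \<subseteq> U" and P: "pth U G P"
    and lng: "length P = lp U G" and Q: "Q \<in> rots G P"
    and ux: "{last Q, x} \<in> G" and xE: "x \<notin> last ` rots G P"
  shows "\<exists>z \<in> last ` rots G P. z \<in> nb P x"
proof -
  define End where "End = last ` rots G P"
  have QI: "pth U G Q" "hd Q = hd P" "set Q = set P" "length Q = length P"
    using rots_inv[OF P Q] by auto
  have xU: "x \<in> U" using edg ux by blast
  have Qne: "Q \<noteq> []" and Qd: "distinct Q" using QI(1) by (auto simp: pth_def)
  have xQ: "x \<in> set Q"
  proof (rule ccontr)
    assume nx: "x \<notin> set Q"
    have "pth U G (Q@[x])" using QI(1) nx xU ux Qne by (auto simp: pth_def es_snoc)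
    then have "length (Q@[x]) \<le> lp U G" by (rule pth_le_lp[OF fin])
    then show False using QI(4) lng by simp
  qed
  then obtain i where i: "i < length Q" "Q!i = x" by (metis in_set_conv_nth)
  have lastQ: "last Q \<in> End" using Q by (simp add: End_def)
  have "i \<noteq> length Q - 1" using i lastQ xE Qne by (metis End_def last_conv_nth)
  then have si: "Suc i < length Q" using i by simp
  define z where "z = Q!Suc i"
  have zE: "z \<in> End" unfolding End_def z_def
    using rots.step[OF Q si] ux i rot_facts(2)[OF si] by (metis image_eqI)
  have zQ: "z \<in> nb Q x" unfolding nb_def z_def using es_nth[OF si] i by simp
  show ?thesis
  proof (rule ccontr)
    assume H: "\<not> (\<exists>z \<in> last ` rots G P. z \<in> nb P x)"
    then have H': "\<forall>y\<in>End. y \<notin> nb P x" by (simp add: End_def)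
    have sub: "nb P x \<subseteq> nb Q x"
    proof
      fix y assume y: "y \<in> nb P x"
      then have "{x,y} \<in> es P" by (simp add: nb_def)
      from rots_inv1[OF Q this] have "{x,y} \<in> es Q \<or> (\<exists>w\<in>End. w = x \<or> w = y)"
        by (auto simp: End_def)
      then show "y \<in> nb Q x" using xE y H' by (auto simp: nb_def End_def)
    qed
    have zP: "z \<notin> nb P x" using H' zE by blast
    have Pd: "distinct P" and Pne: "P \<noteq> []" using P by (auto simp: pth_def)
    have "x \<in> set P" using xQ QI(3) by simp
    then obtain j where j: "j < length P" "P!j = x" by (metis in_set_conv_nth)
    have lastP: "last P \<in> End" by (simp add: End_def rots.base)
    have "j \<noteq> length P - 1" using j lastP xE Pne by (metis End_def last_conv_nth)
    then have sj: "Suc j < length P" using j by simp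
    have "P!Suc j \<in> nb P x" unfolding nb_def using es_nth[OF sj] j by simp
    then have "P!Suc j \<in> nb Q (Q!i)" using sub i by auto
    from nb_idx[OF Qd i(1) this] zP \<open>P!Suc j \<in> nb P x\<close>
    have i0: "0 < i" and pq: "P!Suc j = Q!(i-1)" by (auto simp: z_def)
    show False
    proof (cases j)
      case 0
      then have "x = hd P" using j Pne by (simp add: hd_conv_nth)
      then have "Q!0 = Q!i" using QI(2) Qne i by (simp add: hd_conv_nth)
      then have "i = 0" using Qd i(1) Qne nth_eq_iff_index_eq by fastforce
      then show False using i0 by simp
    next
      case (Suc j')
      have "{P!j', P!Suc j'} \<in> es P" using es_nth[of j' P] j Suc by simp
      then have "P!j' \<in> nb P x" using j Suc by (simp add: nb_def insert_commute)
      then have "P!j' \<in> nb Q (Q!i)" using sub i by auto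
      from nb_idx[OF Qd i(1) this] zP \<open>P!j' \<in> nb P x\<close>
      have "P!j' = Q!(i-1)" by (auto simp: z_def)
      then have "P!j' = P!Suc j" using pq by simp
      then have "j' = Suc j" using Pd sj Suc nth_eq_iff_index_eq j by fastforce
      then show False using Suc by simp
    qed
  qed
qed



lemma nb_sym: "y \<in> nb P x \<longleftrightarrow> x \<in> nb P y"
  by (simp add: nb_def insert_commute)

lemma posa_End_large:
  assumes fin: "finite U" and edg: "\<forall>e\<in>G. e \<subseteq> U" and ex: "is_expander2 U G"
    and P: "pth U G P" and lng: "length P = lp U G"
  shows "real (card (last ` rots G P)) > real (card U) / 4"
proof (rule ccontr)
  assume neg: "\<not> ?thesis"
  define End where "End = last ` rots G P"
  have EndP: "End \<subseteq> set P"
  proof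
    fix z assume "z \<in> End"
    then obtain Q where Q: "Q \<in> rots G P" "z = last Q" by (auto simp: End_def)
    then have "pth U G Q" "set Q = set P" using rots_inv[OF P Q(1)] by auto
    then show "z \<in> set P" using Q(2) by (auto simp: pth_def)
  qed
  have finE: "finite End" using EndP finite_subset by blast
  have EU: "End \<subseteq> U" using EndP P by (auto simp: pth_def)
  have Pd: "distinct P" and Pne: "P \<noteq> []" using P by (auto simp: pth_def)
  have lastP: "last P \<in> End" by (simp add: End_def rots.base)
  have sub: "nbhd G End \<subseteq> (\<Union>z\<in>End. nb P z)"
  proof
    fix b assume "b \<in> nbhd G End"
    then obtain a where a: "a \<in> End" "{a,b} \<in> G" and bE: "b \<notin> End" by (auto simp: nbhd_def)
    obtain Q where Q: "Q \<in> rots G P" "a = last Q" using a(1) by (auto simp: End_def)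
    have "{last Q, b} \<in> G" using a(2) Q(2) by simp
    from posa_nb[OF fin edg P lng Q(1) this bE[unfolded End_def]]
    obtain z where "z \<in> End" "z \<in> nb P b" unfolding End_def by blast
    then show "b \<in> (\<Union>z\<in>End. nb P z)" using nb_sym by fast
  qed
  have finN: "finite (\<Union>z\<in>End. nb P z)" using finE
    by (metis finite_UN_I finite_set finite_subset nb_sub)
  have "card (nbhd G End) \<le> card (\<Union>z\<in>End. nb P z)" using card_mono[OF finN sub] .
  also have "\<dots> \<le> (\<Sum>z\<in>End. card (nb P z))" using card_UN_le[OF finE] .
  also have "\<dots> = card (nb P (last P)) + (\<Sum>z\<in>End - {last P}. card (nb P z))"
    using sum.remove[OF finE lastP] .
  also have "\<dots> \<le> 1 + card (End - {last P}) * 2"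
  proof -
    have "(\<Sum>z\<in>End - {last P}. card (nb P z)) \<le> card (End - {last P}) * 2"
      using nb_card2[OF Pd] sum_bounded_above[of "End - {last P}" "\<lambda>z. card (nb P z)" 2] by simp
    then show ?thesis using nb_card_last[OF Pd Pne] by linarith
  qed
  also have "\<dots> < 2 * card End"
  proof -
    have "card End > 0" using finE lastP card_gt_0_iff by blast
    moreover have "card (End - {last P}) = card End - 1" using finE lastP by (simp add: card_Diff_singleton)
    ultimately show ?thesis by linarith
  qed
  finally have lt: "card (nbhd G End) < 2 * card End" .
  have "real (card End) \<le> real (card U) / 4" using neg by (simp add: End_def)
  then have "card (nbhd G End) \<ge> 2 * card End" using ex EU by (auto simp: is_expander2_def)
  then show False using lt by simp
qed

lemma closed_big:
  assumes fin: "finite U" and edg: "\<forall>e\<in>G. e \<subseteq> U" and ex: "is_expander2 U G"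
    and YU: "Y \<subseteq> U" and Yne: "Y \<noteq> {}" and cl: "\<forall>a\<in>Y. \<forall>b. {a,b} \<in> G \<longrightarrow> b \<in> Y"
  shows "3 * (card U div 4) \<le> card Y"
proof -
  define k where "k = card U div 4"
  have kr: "real k \<le> real (card U) / 4" unfolding k_def by linarith
  have finY: "finite Y" using fin YU finite_subset by blast
  have nbA: "nbhd G A \<subseteq> Y - A" if "A \<subseteq> Y" for A
    using that cl by (auto simp: nbhd_def)
  have "card Y > k"
  proof (rule ccontr)
    assume "\<not> card Y > k"
    then have "real (card Y) \<le> real (card U) / 4" using kr by linarith
    then have "card (nbhd G Y) \<ge> 2 * card Y" using ex YU by (auto simp: is_expander2_def)
    moreover have "nbhd G Y = {}" using nbA[of Y] by auto
    moreover have "card Y > 0" using finY Yne by (simp add: card_gt_0_iff)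
    ultimately show False by simp
  qed
  then obtain A where A: "A \<subseteq> Y" "card A = k" "finite A"
    using obtain_subset_with_card_n[of k Y] by auto
  have "real (card A) \<le> real (card U) / 4" using A kr by simp
  then have "card (nbhd G A) \<ge> 2 * k" using ex A YU by (auto simp: is_expander2_def)
  moreover have "card (nbhd G A) \<le> card (Y - A)"
    using card_mono[OF _ nbA[OF A(1)]] finY by simp
  moreover have "card (Y - A) = card Y - k" using A finY by (simp add: card_Diff_subset)
  ultimately show ?thesis unfolding k_def[symmetric] using \<open>card Y > k\<close> by linarith
qed

lemma conn:
  assumes fin: "finite U" and big: "card U \<ge> 12" and edg: "\<forall>e\<in>G. e \<subseteq> U"
    and ex: "is_expander2 U G" and XU: "X \<subseteq> U" and Xne: "X \<noteq> {}" and XnU: "X \<noteq> U"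
  shows "\<exists>a\<in>X. \<exists>b\<in>U - X. {a,b} \<in> G"
proof (rule ccontr)
  assume H: "\<not> ?thesis"
  have c1: "\<forall>a\<in>X. \<forall>b. {a,b} \<in> G \<longrightarrow> b \<in> X"
  proof (intro ballI allI impI)
    fix a b assume "a \<in> X" "{a,b} \<in> G"
    moreover then have "b \<in> U" using edg by blast
    ultimately show "b \<in> X" using H by blast
  qed
  have c2: "\<forall>a\<in>U - X. \<forall>b. {a,b} \<in> G \<longrightarrow> b \<in> U - X"
  proof (intro ballI allI impI)
    fix a b assume a: "a \<in> U - X" and ab: "{a,b} \<in> G"
    then have "b \<in> U" using edg by blast
    moreover have "b \<notin> X" using H a ab by (metis insert_commute)
    ultimately show "b \<in> U - X" by blast
  qed
  have "3 * (card U div 4) \<le> card X" using closed_big[OF fin edg ex XU Xne c1] .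
  moreover have "3 * (card U div 4) \<le> card (U - X)" using closed_big[OF fin edg ex _ _ c2] XU XnU by blast
  moreover have "card U = card X + card (U - X)" using fin XU
    by (metis card_Diff_subset finite_subset le_add_diff_inverse card_mono)
  ultimately show False using big by linarith
qed

definition boosters :: "nat set \<Rightarrow> nat set set \<Rightarrow> nat set set" where
  "boosters U G = {e. \<exists>x\<in>U. \<exists>y\<in>U. x \<noteq> y \<and> e = {x,y} \<and>
       (hamiltonian_on (insert e G) U \<or> lp U G < lp U (insert e G))}"

lemma booster_pair:
  assumes fin: "finite U" and big: "card U \<ge> 12" and edg: "\<forall>e\<in>G. e \<subseteq> U"
    and ex: "is_expander2 U G" and Q: "pth U G Q" and lng: "length Q = lp U G"
    and two: "length Q \<ge> 2"
  shows "{hd Q, last Q} \<in> boosters U G"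
proof -
  define v where "v = hd Q"
  define w where "w = last Q"
  have Qd: "distinct Q" and Qne: "Q \<noteq> []" and QU: "set Q \<subseteq> U" and QG: "es Q \<subseteq> G"
    using Q by (auto simp: pth_def)
  have vw: "v \<noteq> w" unfolding v_def w_def using Qd two Qne
    by (simp add: hd_conv_nth last_conv_nth nth_eq_iff_index_eq)
  have vU: "v \<in> U" "w \<in> U" unfolding v_def w_def using QU Qne by auto
  have "hamiltonian_on (insert {v,w} G) U \<or> lp U G < lp U (insert {v,w} G)"
  proof (cases "set Q = U")
    case True
    have "length Q \<ge> 3" using True distinct_card[OF Qd] big by simp
    moreover have "es Q \<subseteq> insert {v,w} G" using QG by blast
    moreover have "{last Q, hd Q} \<in> insert {v,w} G" unfolding v_def w_def by (simp add: insert_commute)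
    ultimately have "hamiltonian_on (insert {v,w} G) U"
      unfolding hamiltonian_on_def using Qd True es_idx_all by metis
    then show ?thesis by simp
  next
    case False
    obtain a b where ab: "a \<in> set Q" "b \<in> U - set Q" "{a,b} \<in> G"
      using conn[OF fin big edg ex QU _ False] Qne by auto
    obtain k where k: "k < length Q" "Q!k = a" using ab(1) by (metis in_set_conv_nth)
    define T where "T = take (Suc k) Q"
    define D where "D = drop (Suc k) Q"
    define C where "C = D @ T"
    have QTD: "Q = T @ D" by (simp add: T_def D_def)
    have Tne: "T \<noteq> []" unfolding T_def using Qne by simp
    have lastT: "last T = a" unfolding T_def using k by (simp add: last_take_Suc)
    have hdT: "hd T = v" unfolding T_def v_def by simp
    have esT: "es T \<subseteq> es Q" "es D \<subseteq> es Q" using es_append_sup[of T D] QTD by auto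
    have esC: "es C \<subseteq> insert {v,w} G"
    proof (cases "D = []")
      case True then show ?thesis using esT QG by (auto simp: C_def)
    next
      case False
      have "last D = w" unfolding D_def w_def using False by (simp add: D_def)
      then have "es C = es D \<union> es T \<union> {{w, v}}" unfolding C_def using es_append[OF False Tne] hdT by simp
      then show ?thesis using esT QG by (auto simp: insert_commute)
    qed
    have lastC: "last C = a" unfolding C_def using Tne lastT by simp
    have Cne: "C \<noteq> []" unfolding C_def using Tne by simp
    have setC: "set C = set Q" unfolding C_def using QTD by auto
    have distC: "distinct C" unfolding C_def using Qd QTD by auto
    have "pth U (insert {v,w} G) (C @ [b])"
      unfolding pth_def using Cne distC setC ab QU esC lastC
      by (auto simp: es_snoc)
    then have "length (C @ [b]) \<le> lp U (insert {v,w} G)" by (rule pth_le_lp[OF fin])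
    moreover have "length C = length Q" unfolding C_def using QTD
      by (metis length_append add.commute)
    ultimately show ?thesis using lng by simp
  qed
  then show ?thesis unfolding boosters_def v_def[symmetric] w_def[symmetric] using vw vU by blast
qed



lemma card2: "card {a, b} \<le> 2"
  using card_insert_le_m1[of 2 "{b}" a] by simp

lemma boosters_elem: "e \<in> boosters U G \<Longrightarrow> \<exists>x y. x \<in> U \<and> y \<in> U \<and> x \<noteq> y \<and> e = {x,y}"
  unfolding boosters_def by blast

lemma boosters_finite: "finite U \<Longrightarrow> finite (boosters U G)"
proof -
  assume "finite U"
  moreover have "boosters U G \<subseteq> Pow U" by (auto simp: boosters_def)
  ultimately show ?thesis by (meson finite_Pow_iff finite_subset)
qed

lemma boosters_large:
  assumes fin: "finite U" and big: "card U \<ge> 12" and edg: "\<forall>e\<in>G. e \<subseteq> U"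
    and ex: "is_expander2 U G"
  shows "real (card (boosters U G)) \<ge> real (card U)^2 / 32"
proof -
  define N where "N = card U"
  have Une: "U \<noteq> {}" using big by auto
  obtain P where P: "pth U G P" "length P = lp U G" using lp_exists[OF fin Une] by blast
  define S1 where "S1 = last ` rots G P"
  have S1big: "real (card S1) > real N / 4" unfolding S1_def N_def
    using posa_End_large[OF fin edg ex P] .
  define QQ where "QQ v = (SOME Q. Q \<in> rots G P \<and> last Q = v)" for v
  have QQ: "QQ v \<in> rots G P \<and> last (QQ v) = v" if "v \<in> S1" for v
    unfolding QQ_def using that someI_ex[of "\<lambda>Q. Q \<in> rots G P \<and> last Q = v"] by (auto simp: S1_def)
  define S2 where "S2 v = last ` rots G (rev (QQ v))" for v
  have revP: "pth U G (rev (QQ v)) \<and> length (rev (QQ v)) = lp U G \<and> hd (rev (QQ v)) = v" if "v \<in> S1" for v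
  proof -
    have "pth U G (QQ v)" "length (QQ v) = length P" using rots_inv[OF P(1)] QQ[OF that] by auto
    then show ?thesis using P QQ[OF that] by (auto simp: pth_def es_rev hd_rev)
  qed
  have S2big: "real (card (S2 v)) > real N / 4" if "v \<in> S1" for v
    unfolding S2_def N_def using posa_End_large[OF fin edg ex] revP[OF that] by blast
  have finP: "finite S1" unfolding S1_def
  proof -
    have "last ` rots G P \<subseteq> set P"
      using rots_inv[OF P(1)] by (force simp: pth_def)
    then show "finite (last ` rots G P)" using finite_subset by blast
  qed
  have lenP: "length P \<ge> 2"
  proof -
    have "last ` rots G P \<subseteq> set P"
      using rots_inv[OF P(1)] by (force simp: pth_def)
    then have "card S1 \<le> length P" unfolding S1_def by (metis card_length card_mono finite_set order_trans)
    moreover have "real N / 4 \<ge> 3" using big by (simp add: N_def)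
    ultimately show ?thesis using S1big by linarith
  qed
  have fin2: "finite (S2 v)" if "v \<in> S1" for v
  proof -
    have "S2 v \<subseteq> U" unfolding S2_def using rots_inv[OF revP[OF that, THEN conjunct1]] revP[OF that]
      by (force simp: pth_def)
    then show ?thesis using fin finite_subset by blast
  qed
  have inB: "{v,w} \<in> boosters U G" if vS: "v \<in> S1" and wS: "w \<in> S2 v" for v w
  proof -
    obtain Q' where Q': "Q' \<in> rots G (rev (QQ v))" "last Q' = w" using wS by (auto simp: S2_def)
    have I: "pth U G Q'" "hd Q' = v" "length Q' = lp U G"
      using rots_inv[OF revP[OF vS, THEN conjunct1] Q'(1)] revP[OF vS] by auto
    have "length Q' \<ge> 2" using I(3) P(2) lenP by simp
    from booster_pair[OF fin big edg ex I(1) I(3) this] show ?thesis using I(2) Q'(2) by simp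
  qed
  define B where "B = boosters U G"
  have finB: "finite B" unfolding B_def using boosters_finite[OF fin] .
  define fib where "fib e = {ab \<in> U \<times> U. {fst ab, snd ab} = e}" for e
  have sig: "Sigma S1 S2 \<subseteq> (\<Union>e\<in>B. fib e)"
  proof
    fix ab assume "ab \<in> Sigma S1 S2"
    then obtain a b where ab: "ab = (a,b)" "a \<in> S1" "b \<in> S2 a" by auto
    have abB: "{a,b} \<in> B" using inB[OF ab(2,3)] by (simp add: B_def)
    moreover have "a \<in> U \<and> b \<in> U"
    proof -
      obtain x y where "x \<in> U" "y \<in> U" "{a,b} = {x,y}" using boosters_elem abB unfolding B_def by blast
      then show ?thesis by (auto simp: doubleton_eq_iff)
    qed
    ultimately show "ab \<in> (\<Union>e\<in>B. fib e)" using ab(1) by (auto simp: fib_def)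
  qed
  have fibc: "card (fib e) \<le> 2" if "e \<in> B" for e
  proof -
    have "\<exists>x y. e = {x,y}" using that boosters_elem unfolding B_def by blast
    then obtain x y where e: "e = {x,y}" by blast
    have "fib e \<subseteq> {(x,y),(y,x)}"
    proof
      fix ab assume "ab \<in> fib e"
      then have "{fst ab, snd ab} = {x,y}" by (simp add: fib_def e)
      then have "(fst ab = x \<and> snd ab = y) \<or> (fst ab = y \<and> snd ab = x)" by (simp add: doubleton_eq_iff)
      then show "ab \<in> {(x,y),(y,x)}" by (cases ab) auto
    qed
    moreover have "card {(x,y),(y,x)} \<le> 2" by (rule card2)
    ultimately show ?thesis using card_mono[of "{(x,y),(y,x)}" "fib e"] by simp
  qed
  have finU: "finite (\<Union>e\<in>B. fib e)"
  proof -
    have "(\<Union>e\<in>B. fib e) \<subseteq> U \<times> U" by (auto simp: fib_def)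
    then show ?thesis using fin finite_subset by blast
  qed
  have "card (Sigma S1 S2) \<le> card (\<Union>e\<in>B. fib e)" by (rule card_mono[OF finU sig])
  also have "\<dots> \<le> (\<Sum>e\<in>B. card (fib e))" by (rule card_UN_le[OF finB])
  also have "\<dots> \<le> card B * 2" using sum_bounded_above[of B "\<lambda>e. card (fib e)" 2] fibc by simp
  finally have c1: "real (card (Sigma S1 S2)) \<le> 2 * real (card B)" by linarith
  have "card (Sigma S1 S2) = (\<Sum>v\<in>S1. card (S2 v))" using finP fin2 by simp
  then have "real (card (Sigma S1 S2)) = (\<Sum>v\<in>S1. real (card (S2 v)))" by simp
  also have "\<dots> \<ge> (\<Sum>v\<in>S1. real N / 4)" using S2big by (intro sum_mono) (simp add: less_imp_le)
  finally have "real (card (Sigma S1 S2)) \<ge> real (card S1) * (real N / 4)" by simp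
  moreover have "real (card S1) * (real N / 4) \<ge> (real N / 4) * (real N / 4)"
    using S1big by (intro mult_right_mono) auto
  ultimately have "2 * real (card B) \<ge> (real N / 4) * (real N / 4)" using c1 by linarith
  then show ?thesis unfolding B_def N_def by (simp add: power2_eq_square)
qed



lemma subset_binom:
  fixes a b :: real
  assumes "finite R"
  shows "(\<Sum>T\<in>Pow R. a ^ card T * b ^ (card R - card T)) = (a + b) ^ card R"
  using assms
proof (induction R rule: finite_induct)
  case empty then show ?case by simp
next
  case (insert x F)
  have disj: "Pow F \<inter> insert x ` Pow F = {}" using insert(2) by auto
  have inj: "inj_on (insert x) (Pow F)" using insert(2) by (auto simp: inj_on_def)
  have finP: "finite (Pow F)" "finite (insert x ` Pow F)" using insert(1) by auto
  have cF: "card (insert x F) = Suc (card F)" using insert by simp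
  have s1: "(\<Sum>T\<in>Pow F. a ^ card T * b ^ (card (insert x F) - card T)) = b * (a+b)^card F"
  proof -
    have "(\<Sum>T\<in>Pow F. a ^ card T * b ^ (card (insert x F) - card T))
        = (\<Sum>T\<in>Pow F. b * (a ^ card T * b ^ (card F - card T)))"
    proof (rule sum.cong[OF refl])
      fix T assume "T \<in> Pow F"
      then have "card T \<le> card F" using insert(1) by (simp add: card_mono)
      then have "card (insert x F) - card T = Suc (card F - card T)" using cF by simp
      then show "a ^ card T * b ^ (card (insert x F) - card T) = b * (a ^ card T * b ^ (card F - card T))"
        by simp
    qed
    also have "\<dots> = b * (a+b)^card F" using insert(3) by (metis sum_distrib_left)
    finally show ?thesis .
  qed
  have s2: "(\<Sum>T\<in>insert x ` Pow F. a ^ card T * b ^ (card (insert x F) - card T)) = a * (a+b)^card F"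
  proof -
    have "(\<Sum>T\<in>insert x ` Pow F. a ^ card T * b ^ (card (insert x F) - card T))
        = (\<Sum>T\<in>Pow F. a ^ card (insert x T) * b ^ (card (insert x F) - card (insert x T)))"
      using sum.reindex[OF inj] by simp
    also have "\<dots> = (\<Sum>T\<in>Pow F. a * (a ^ card T * b ^ (card F - card T)))"
    proof (rule sum.cong[OF refl])
      fix T assume T: "T \<in> Pow F"
      then have fT: "finite T" using insert(1) finite_subset by auto
      have "x \<notin> T" using T insert(2) by auto
      then have "card (insert x T) = Suc (card T)" using fT by simp
      then show "a ^ card (insert x T) * b ^ (card (insert x F) - card (insert x T)) = a * (a ^ card T * b ^ (card F - card T))"
        using cF by simp
    qed
    also have "\<dots> = a * (a+b)^card F" using insert(3) by (metis sum_distrib_left)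
    finally show ?thesis .
  qed
  have "(\<Sum>T\<in>Pow (insert x F). a ^ card T * b ^ (card (insert x F) - card T))
      = (\<Sum>T\<in>Pow F. a ^ card T * b ^ (card (insert x F) - card T))
        + (\<Sum>T\<in>insert x ` Pow F. a ^ card T * b ^ (card (insert x F) - card T))"
    unfolding Pow_insert using sum.union_disjoint[OF finP disj] by simp
  also have "\<dots> = (a+b)^card (insert x F)" using s1 s2 cF by (simp add: algebra_simps)
  finally show ?case .
qed

lemma sum_cond:
  fixes p :: real
  assumes fA: "finite A" and SA: "S \<subseteq> A" and BA: "B \<subseteq> A" and SB: "S \<inter> B = {}"
  shows "(\<Sum>E\<in>Pow A. if S \<subseteq> E \<and> E \<inter> B = {} then p ^ card E * (1-p) ^ (card A - card E) else 0)
         = p ^ card S * (1-p) ^ card B"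
proof -
  define R where "R = A - S - B"
  have fS: "finite S" "finite B" "finite R" using fA SA BA finite_subset by (auto simp: R_def)
  have cA: "card A = card S + card B + card R"
  proof -
    have "A = S \<union> B \<union> R" using SA BA by (auto simp: R_def)
    moreover have "card (S \<union> B) = card S + card B" using fS SB by (simp add: card_Un_disjoint)
    moreover have "card (S \<union> B \<union> R) = card (S \<union> B) + card R"
      using fS by (intro card_Un_disjoint) (auto simp: R_def)
    ultimately show ?thesis by simp
  qed
  have eqset: "{E \<in> Pow A. S \<subseteq> E \<and> E \<inter> B = {}} = (\<lambda>T. S \<union> T) ` Pow R"
  proof
    show "{E \<in> Pow A. S \<subseteq> E \<and> E \<inter> B = {}} \<subseteq> (\<lambda>T. S \<union> T) ` Pow R"
    proof
      fix E assume E: "E \<in> {E \<in> Pow A. S \<subseteq> E \<and> E \<inter> B = {}}"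
      then have "E = S \<union> (E - S)" "E - S \<in> Pow R" by (auto simp: R_def)
      then show "E \<in> (\<lambda>T. S \<union> T) ` Pow R" by blast
    qed
    show "(\<lambda>T. S \<union> T) ` Pow R \<subseteq> {E \<in> Pow A. S \<subseteq> E \<and> E \<inter> B = {}}"
      using SA SB by (auto simp: R_def)
  qed
  have inj: "inj_on (\<lambda>T. S \<union> T) (Pow R)"
  proof (rule inj_onI)
    fix T1 T2 assume "T1 \<in> Pow R" "T2 \<in> Pow R" "S \<union> T1 = S \<union> T2"
    then show "T1 = T2" by (auto simp: R_def)
  qed
  have "(\<Sum>E\<in>Pow A. if S \<subseteq> E \<and> E \<inter> B = {} then p ^ card E * (1-p) ^ (card A - card E) else 0)
      = (\<Sum>E\<in>{E \<in> Pow A. S \<subseteq> E \<and> E \<inter> B = {}}. p ^ card E * (1-p) ^ (card A - card E))"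
    using fA by (intro sum.inter_filter[symmetric]) simp
  also have "\<dots> = (\<Sum>T\<in>Pow R. p ^ card (S \<union> T) * (1-p) ^ (card A - card (S \<union> T)))"
    unfolding eqset using sum.reindex[OF inj] by simp
  also have "\<dots> = (\<Sum>T\<in>Pow R. (p ^ card S * (1-p) ^ card B) * (p ^ card T * (1-p) ^ (card R - card T)))"
  proof (rule sum.cong[OF refl])
    fix T assume T: "T \<in> Pow R"
    then have fT: "finite T" using fS finite_subset by auto
    have "S \<inter> T = {}" using T by (auto simp: R_def)
    then have cST: "card (S \<union> T) = card S + card T" using fS fT by (simp add: card_Un_disjoint)
    have "card T \<le> card R" using T fS by (simp add: card_mono)
    then have "card A - card (S \<union> T) = card B + (card R - card T)" using cA cST by simp
    then show "p ^ card (S \<union> T) * (1-p) ^ (card A - card (S \<union> T))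
        = (p ^ card S * (1-p) ^ card B) * (p ^ card T * (1-p) ^ (card R - card T))"
      using cST by (simp add: power_add algebra_simps)
  qed
  also have "\<dots> = (p ^ card S * (1-p) ^ card B) * (\<Sum>T\<in>Pow R. p ^ card T * (1-p) ^ (card R - card T))"
    by (simp add: sum_distrib_left)
  also have "\<dots> = p ^ card S * (1-p) ^ card B"
    using subset_binom[OF fS(3), of p "1-p"] by simp
  finally show ?thesis .
qed

lemma union_bound:
  fixes w :: "'a \<Rightarrow> real"
  assumes fA: "finite A" and fC: "finite C" and cov: "\<forall>E\<in>A. P E \<longrightarrow> (\<exists>c\<in>C. Q c E)"
    and nn: "\<forall>E\<in>A. w E \<ge> 0"
  shows "(\<Sum>E\<in>A. if P E then w E else 0) \<le> (\<Sum>c\<in>C. \<Sum>E\<in>A. if Q c E then w E else 0)"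
proof -
  have "(\<Sum>E\<in>A. if P E then w E else 0) \<le> (\<Sum>E\<in>A. \<Sum>c\<in>C. if Q c E then w E else 0)"
  proof (rule sum_mono)
    fix E assume E: "E \<in> A"
    have nn2: "\<forall>c\<in>C. 0 \<le> (if Q c E then w E else 0)" using nn E by simp
    show "(if P E then w E else 0) \<le> (\<Sum>c\<in>C. if Q c E then w E else 0)"
    proof (cases "P E")
      case True
      then obtain c where c: "c \<in> C" "Q c E" using cov E by blast
      have "(if Q c E then w E else 0) \<le> (\<Sum>c\<in>C. if Q c E then w E else 0)"
        by (rule member_le_sum[OF c(1)]) (use nn2 fC in auto)
      then show ?thesis using True c by simp
    next
      case False
      then show ?thesis using nn2 by (simp add: sum_nonneg)
    qed
  qed
  also have "\<dots> = (\<Sum>c\<in>C. \<Sum>E\<in>A. if Q c E then w E else 0)" by (rule sum.swap)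
  finally show ?thesis .
qed



lemma ham_mono: "hamiltonian_on G U \<Longrightarrow> G \<subseteq> G' \<Longrightarrow> hamiltonian_on G' U"
  unfolding hamiltonian_on_def by blast

lemma nbhd_sub: "\<forall>e\<in>G. e \<subseteq> U \<Longrightarrow> nbhd G A \<subseteq> U"
  unfolding nbhd_def by blast

lemma expander_mono:
  assumes ex: "is_expander2 U F" and FG: "F \<subseteq> G" and fin: "finite U" and edg: "\<forall>e\<in>G. e \<subseteq> U"
  shows "is_expander2 U G"
  unfolding is_expander2_def
proof (intro allI impI)
  fix A assume A: "A \<subseteq> U \<and> real (card A) \<le> real (card U) / 4"
  then have "2 * card A \<le> card (nbhd F A)" using ex by (simp add: is_expander2_def)
  moreover have "nbhd F A \<subseteq> nbhd G A" using FG unfolding nbhd_def by blast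
  moreover have "finite (nbhd G A)" using nbhd_sub[OF edg] fin finite_subset by blast
  ultimately show "2 * card A \<le> card (nbhd G A)" using card_mono by (metis le_trans)
qed

lemma all_edges_fin: "finite (all_edges n)" and all_edges_card: "card (all_edges n) \<le> n^2"
proof -
  have sub: "all_edges n \<subseteq> (\<lambda>(u,v). {u,v}) ` ({..<n} \<times> {..<n})"
    unfolding all_edges_def by auto
  then show "finite (all_edges n)" using finite_subset by blast
  have "card (all_edges n) \<le> card ((\<lambda>(u,v). {u,v}) ` ({..<n} \<times> {..<n}))"
    using sub by (intro card_mono) auto
  also have "\<dots> \<le> card ({..<n} \<times> {..<n})" by (rule card_image_le) simp
  also have "\<dots> = n^2" by (simp add: power2_eq_square)
  finally show "card (all_edges n) \<le> n^2" .
qed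

lemma boosters_AE: "U \<subseteq> {..<n} \<Longrightarrow> boosters U G \<subseteq> all_edges n"
  unfolding all_edges_def using boosters_elem by blast

definition cert :: "nat \<Rightarrow> real \<Rightarrow> (nat set \<times> nat set set) set" where
  "cert n p = {(U,H). U \<subseteq> {..<n} \<and> H \<subseteq> all_edges n \<and>
     real (card H) \<le> p * real n ^ 2 / 10^17 + real n \<and> real (card U) \<ge> 4 * real n / 10^6 \<and>
     (\<forall>e\<in>H. e \<subseteq> U) \<and> is_expander2 U H \<and> \<not> hamiltonian_on H U}"

lemma cert_finite: "finite (cert n p)"
proof -
  have "cert n p \<subseteq> Pow {..<n} \<times> Pow (all_edges n)" by (auto simp: cert_def)
  then show ?thesis using all_edges_fin finite_subset by (metis finite_Pow_iff finite_SigmaI finite_lessThan)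
qed

lemma cert_exists:
  assumes n: "real n \<ge> 3000000" and E: "E \<subseteq> all_edges n" and bad: "\<not> lemma_property n p E"
  shows "\<exists>c\<in>cert n p. snd c \<subseteq> E \<and> E \<inter> boosters (fst c) (snd c) = {}"
proof -
  obtain U F where U: "U \<subseteq> {..<n}" "real (card U) \<ge> 4 * real n / 10^6"
    and F: "subgraph_on E U F" "real (card F) \<le> p * real n ^ 2 / 10^17" "is_expander2 U F"
    and nh: "\<not> hamiltonian_on E U"
    using bad unfolding lemma_property_def by blast
  have fin: "finite U" using U(1) finite_subset by blast
  have big: "card U \<ge> 12" using U(2) n by simp
  have Une: "U \<noteq> {}" using big by auto
  obtain P where P: "pth U E P" "length P = lp U E" using lp_exists[OF fin Une] by blast
  define H where "H = F \<union> es P"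
  have HE: "H \<subseteq> E" using F(1) P(1) by (auto simp: H_def subgraph_on_def pth_def)
  have edg: "\<forall>e\<in>H. e \<subseteq> U" using F(1) P(1) es_subset_set unfolding H_def subgraph_on_def pth_def by blast
  have cU: "card U \<le> n" using U(1) by (metis card_lessThan card_mono finite_lessThan)
  have "card H \<le> card F + card (es P)" unfolding H_def by (rule card_Un_le)
  also have "\<dots> \<le> card F + n" using es_card[of P] pth_len[OF fin P(1)] cU by linarith
  finally have cH: "real (card H) \<le> p * real n ^ 2 / 10^17 + real n" using F(2) by linarith
  have exH: "is_expander2 U H" using expander_mono[OF F(3) _ fin edg] by (simp add: H_def)
  have nhH: "\<not> hamiltonian_on H U" using ham_mono[OF _ HE] nh by blast
  have "pth U H P" using P(1) by (auto simp: pth_def H_def)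
  then have "lp U E \<le> lp U H" using pth_le_lp[OF fin] P(2) by metis
  moreover have "lp U H \<le> lp U E" using lp_mono[OF fin Une HE] .
  ultimately have lpeq: "lp U H = lp U E" by simp
  have disj: "E \<inter> boosters U H = {}"
  proof (rule ccontr)
    assume "E \<inter> boosters U H \<noteq> {}"
    then obtain e where e: "e \<in> E" "e \<in> boosters U H" by blast
    then have ins: "insert e H \<subseteq> E" using HE by blast
    from e(2) have "hamiltonian_on (insert e H) U \<or> lp U H < lp U (insert e H)"
      unfolding boosters_def by blast
    then show False
    proof
      assume "hamiltonian_on (insert e H) U"
      then show False using ham_mono[OF _ ins] nh by blast
    next
      assume "lp U H < lp U (insert e H)"
      moreover have "lp U (insert e H) \<le> lp U E" using lp_mono[OF fin Une ins] .
      ultimately show False using lpeq by simp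
    qed
  qed
  have "H \<subseteq> all_edges n" using HE E by blast
  then have "(U,H) \<in> cert n p" using U cH edg exH nhH by (simp add: cert_def)
  then show ?thesis using HE disj by force
qed

definition wgt :: "nat \<Rightarrow> real \<Rightarrow> nat set set \<Rightarrow> real" where
  "wgt n p E = p ^ card E * (1-p) ^ (card (all_edges n) - card E)"

lemma cert_term:
  assumes c: "c \<in> cert n p" and n: "real n \<ge> 3000000" and p: "0 \<le> p" "p \<le> 1"
  shows "(\<Sum>E\<in>Pow (all_edges n). if snd c \<subseteq> E \<and> E \<inter> boosters (fst c) (snd c) = {}
            then wgt n p E else 0)
         \<le> p ^ card (snd c) * exp (- p * real n ^ 2 / (2 * 10^12))"
proof -
  obtain U H where cUH: "c = (U,H)" by (cases c)
  have U: "U \<subseteq> {..<n}" "H \<subseteq> all_edges n" "real (card U) \<ge> 4 * real n / 10^6"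
     "\<forall>e\<in>H. e \<subseteq> U" "is_expander2 U H" "\<not> hamiltonian_on H U"
    using c by (auto simp: cert_def cUH)
  have fin: "finite U" using U(1) finite_subset by blast
  have big: "card U \<ge> 12" using U(3) n by simp
  define B where "B = boosters U H"
  have BA: "B \<subseteq> all_edges n" unfolding B_def using boosters_AE[OF U(1)] .
  have HB: "H \<inter> B = {}"
  proof (rule ccontr)
    assume "H \<inter> B \<noteq> {}"
    then obtain e where e: "e \<in> H" "e \<in> B" by blast
    then have "insert e H = H" by blast
    moreover have "hamiltonian_on (insert e H) U \<or> lp U H < lp U (insert e H)"
      using e(2) unfolding B_def boosters_def by blast
    ultimately show False using U(6) by simp
  qed
  have cB: "real (card B) \<ge> real (card U)^2 / 32"
    unfolding B_def using boosters_large[OF fin big U(4) U(5)] .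
  have "real (card U)^2 \<ge> (4 * real n / 10^6)^2"
    using U(3) n by (intro power_mono) auto
  then have cB2: "real (card B) \<ge> real n ^ 2 / (2 * 10^12)" using cB
    by (simp add: power2_eq_square field_simps)
  have "(\<Sum>E\<in>Pow (all_edges n). if snd c \<subseteq> E \<and> E \<inter> boosters (fst c) (snd c) = {}
            then wgt n p E else 0)
        = p ^ card H * (1-p) ^ card B"
    unfolding wgt_def cUH fst_conv snd_conv B_def[symmetric] using sum_cond[OF all_edges_fin U(2) BA HB] .
  also have "\<dots> \<le> p ^ card H * exp (- p * real n ^ 2 / (2 * 10^12))"
  proof (rule mult_left_mono)
    have "(1-p) ^ card B \<le> exp (-p) ^ card B"
      using p by (intro power_mono) (auto simp: add_le_cancel_left[symmetric] exp_ge_add_one_self[of "-p", simplified])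
    also have "\<dots> = exp (- p * real (card B))" by (simp add: exp_of_nat_mult[symmetric] mult.commute)
    also have "\<dots> \<le> exp (- p * real n ^ 2 / (2 * 10^12))"
    proof -
      have h0: "real n^2 \<le> real (card B) * (2*10^12)" using cB2 by (simp add: field_simps)
      have h1: "p * real n^2 \<le> p * (real (card B) * (2*10^12))" by (rule mult_left_mono[OF h0 p(1)])
      then show ?thesis by (simp add: field_simps)
    qed
    finally show "(1-p) ^ card B \<le> exp (- p * real n ^ 2 / (2 * 10^12))" .
  qed (use p in simp)
  finally show ?thesis by (simp add: cUH)
qed



lemma exp100: "exp (-100::real) \<le> 1 / 10^20"
proof -
  have "(2::real) \<le> exp 1" using exp_ge_add_one_self[of 1] by simp
  then have "(2::real)^100 \<le> exp 1 ^ 100" by (intro power_mono) auto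
  also have "exp 1 ^ 100 = exp (100::real)" using exp_of_nat_mult[of 100 "1::real"] by simp
  finally have "exp (100::real) \<ge> 10^20" by simp
  then show ?thesis by (simp add: exp_minus field_simps)
qed


lemma gnp_bound:
  fixes n :: nat and p :: real
  assumes p: "0 \<le> p" "p \<le> 1" and pn: "p * real n \<ge> 10^17"
  shows "gnp_prob n p (\<lambda>E. \<not> lemma_property n p E) \<le> exp (- real n)"
proof -
  define AE where "AE = all_edges n"
  define X where "X = exp (- p * real n ^ 2 / (2 * 10^12))"
  define K where "K = p * real n ^ 2 / 10^17 + real n"
  define t where "t = exp (-100::real)"
  have "p * real n \<le> 1 * real n" using p(2) by (intro mult_right_mono) auto
  then have n1: "real n \<ge> 10^17" using pn by linarith
  then have n3: "real n \<ge> 3000000" by simp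
  have finA: "finite (Pow AE)" using all_edges_fin by (simp add: AE_def)
  have wnn: "\<forall>E\<in>Pow AE. wgt n p E \<ge> 0" using p by (simp add: wgt_def)
  have Xnn: "X \<ge> 0" by (simp add: X_def)
  define Bo where "Bo c = boosters (fst c) (snd c)" for c :: "nat set \<times> nat set set"
  have "gnp_prob n p (\<lambda>E. \<not> lemma_property n p E) = (\<Sum>E\<in>Pow AE. if \<not> lemma_property n p E then wgt n p E else 0)"
    unfolding gnp_prob_def wgt_def AE_def by simp
  also have "\<dots> \<le> (\<Sum>c\<in>cert n p. \<Sum>E\<in>Pow AE. if snd c \<subseteq> E \<and> E \<inter> Bo c = {} then wgt n p E else 0)"
  proof (rule union_bound[OF finA cert_finite _ wnn, where Q="\<lambda>c E. snd c \<subseteq> E \<and> E \<inter> Bo c = {}"])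
    show "\<forall>E\<in>Pow AE. \<not> lemma_property n p E \<longrightarrow> (\<exists>c\<in>cert n p. snd c \<subseteq> E \<and> E \<inter> Bo c = {})"
      using cert_exists[OF n3] by (simp add: AE_def Bo_def)
  qed
  also have "\<dots> \<le> (\<Sum>c\<in>cert n p. p ^ card (snd c) * X)"
    using cert_term[OF _ n3 p] unfolding AE_def Bo_def X_def by (intro sum_mono) simp
  also have "\<dots> \<le> (\<Sum>c\<in>Pow {..<n} \<times> {H\<in>Pow AE. real (card H) \<le> K}. p ^ card (snd c) * X)"
  proof (rule sum_mono2)
    show "finite (Pow {..<n} \<times> {H\<in>Pow AE. real (card H) \<le> K})" using finA by simp
    show "cert n p \<subseteq> Pow {..<n} \<times> {H\<in>Pow AE. real (card H) \<le> K}"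
      by (auto simp: cert_def AE_def K_def)
    show "\<And>c. c \<in> Pow {..<n} \<times> {H\<in>Pow AE. real (card H) \<le> K} - cert n p \<Longrightarrow> 0 \<le> p ^ card (snd c) * X"
      using p Xnn by simp
  qed
  also have "\<dots> = (\<Sum>(U,H)\<in>Pow {..<n} \<times> {H\<in>Pow AE. real (card H) \<le> K}. p ^ card H * X)"
    by (rule sum.cong) auto
  also have "\<dots> = (\<Sum>U\<in>Pow {..<n}. \<Sum>H\<in>{H\<in>Pow AE. real (card H) \<le> K}. p ^ card H * X)"
    by (rule sum.cartesian_product[symmetric])
  also have "\<dots> = 2 ^ n * ((\<Sum>H\<in>{H\<in>Pow AE. real (card H) \<le> K}. p ^ card H) * X)"
    by (simp add: card_Pow sum_distrib_right)
  finally have step1: "gnp_prob n p (\<lambda>E. \<not> lemma_property n p E) \<le> 2 ^ n * ((\<Sum>H\<in>{H\<in>Pow AE. real (card H) \<le> K}. p ^ card H) * X)" .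
  have tpos: "t > 0" by (simp add: t_def)
  have tinv: "t * exp 100 = 1" by (simp add: t_def exp_minus)
  have "(\<Sum>H\<in>{H\<in>Pow AE. real (card H) \<le> K}. p ^ card H) \<le> (\<Sum>H\<in>{H\<in>Pow AE. real (card H) \<le> K}. (p*t) ^ card H * exp (100 * K))"
  proof (rule sum_mono)
    fix H assume H: "H \<in> {H\<in>Pow AE. real (card H) \<le> K}"
    have "p ^ card H = (p*t) ^ card H * exp 100 ^ card H"
      by (simp add: power_mult_distrib[symmetric] mult.assoc tinv)
    also have "exp 100 ^ card H = exp (100 * real (card H))"
      by (simp add: exp_of_nat_mult[symmetric] mult.commute)
    also have "\<dots> \<le> exp (100 * K)" using H by simp
    finally show "p ^ card H \<le> (p*t) ^ card H * exp (100 * K)"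
      using p tpos by (simp add: mult_left_mono)
  qed
  also have "\<dots> \<le> (\<Sum>H\<in>Pow AE. (p*t) ^ card H * exp (100 * K))"
    by (rule sum_mono2) (use finA p tpos in auto)
  also have "\<dots> = (\<Sum>H\<in>Pow AE. (p*t) ^ card H * 1 ^ (card AE - card H)) * exp (100 * K)"
    by (simp add: sum_distrib_right)
  also have "\<dots> = (p*t + 1) ^ card AE * exp (100 * K)"
    using subset_binom[of AE "p*t" 1] all_edges_fin by (simp add: AE_def)
  also have "\<dots> \<le> exp (p*t * real n ^ 2) * exp (100 * K)"
  proof (rule mult_right_mono)
    have "(p*t + 1) ^ card AE \<le> exp (p*t) ^ card AE"
      using p tpos by (intro power_mono) (auto simp: add.commute exp_ge_add_one_self)
    also have "\<dots> = exp (p*t * real (card AE))" by (simp add: exp_of_nat_mult[symmetric] mult.commute)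
    also have "\<dots> \<le> exp (p*t * real n ^ 2)"
    proof -
      have "real (card AE) \<le> real n ^ 2" using all_edges_card[of n] by (simp add: AE_def of_nat_power[symmetric] del: of_nat_power)
      then show ?thesis using p tpos by (simp add: mult_left_mono)
    qed
    finally show "(p*t + 1) ^ card AE \<le> exp (p*t * real n ^ 2)" .
  qed simp
  finally have step2: "(\<Sum>H\<in>{H\<in>Pow AE. real (card H) \<le> K}. p ^ card H) \<le> exp (p*t * real n ^ 2) * exp (100 * K)" .
  have two: "(2::real) ^ n \<le> exp (real n)"
  proof -
    have "(2::real) \<le> exp 1" using exp_ge_add_one_self[of 1] by simp
    then have "(2::real)^n \<le> exp 1 ^ n" by (intro power_mono) auto
    also have "exp 1 ^ n = exp (real n)" using exp_of_nat_mult[of n "1::real"] by simp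
    finally show ?thesis .
  qed
  have "gnp_prob n p (\<lambda>E. \<not> lemma_property n p E) \<le> exp (real n) * ((exp (p*t * real n ^ 2) * exp (100 * K)) * X)"
  proof -
    have "(\<Sum>H\<in>{H\<in>Pow AE. real (card H) \<le> K}. p ^ card H) * X \<le> (exp (p*t * real n ^ 2) * exp (100 * K)) * X"
      using step2 Xnn by (rule mult_right_mono)
    moreover have Snn: "(\<Sum>H\<in>{H\<in>Pow AE. real (card H) \<le> K}. p ^ card H) * X \<ge> 0"
      using p Xnn by (intro mult_nonneg_nonneg sum_nonneg) auto
    ultimately have "2 ^ n * ((\<Sum>H\<in>{H\<in>Pow AE. real (card H) \<le> K}. p ^ card H) * X)
        \<le> exp (real n) * ((exp (p*t * real n ^ 2) * exp (100 * K)) * X)"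
      using mult_mono[OF two \<open>(\<Sum>H\<in>{H\<in>Pow AE. real (card H) \<le> K}. p ^ card H) * X \<le> (exp (p*t * real n ^ 2) * exp (100 * K)) * X\<close> _ Snn] by simp
    then show ?thesis using step1 by linarith
  qed
  also have "\<dots> = exp (real n + p*t * real n ^ 2 + 100 * K - p * real n ^ 2 / (2 * 10^12))"
    by (simp add: X_def exp_add[symmetric] exp_diff algebra_simps)
  also have "\<dots> \<le> exp (- real n)"
  proof -
    define x where "x = p * real n ^ 2"
    have "10^17 * real n \<le> (p * real n) * real n" using mult_right_mono[OF pn, of "real n"] by simp
    then have x1: "x \<ge> 10^17 * real n" unfolding x_def by (simp add: power2_eq_square mult.assoc)
    have x2: "p*t * real n ^ 2 \<le> x / 10^20" unfolding x_def
    proof -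
      have "t * (p * real n ^ 2) \<le> (1/10^20) * (p * real n ^ 2)"
        using exp100 p by (intro mult_right_mono) (auto simp: t_def)
      then show "p*t * real n ^ 2 \<le> p * real n ^ 2 / 10^20" by (simp add: algebra_simps)
    qed
    have "real n + p*t * real n ^ 2 + 100 * K - p * real n ^ 2 / (2 * 10^12) \<le> - real n"
      using x1 x2 n1 unfolding K_def x_def[symmetric] by (simp; linarith)
    then show ?thesis by simp
  qed
  finally show ?thesis .
qed



lemma gnp_nonneg: "0 \<le> p \<Longrightarrow> p \<le> 1 \<Longrightarrow> gnp_prob n p P \<ge> 0"
  unfolding gnp_prob_def by (intro sum_nonneg) auto

theorem lemma6p8:
  fixes p :: "nat \<Rightarrow> real"
  assumes "\<And>n. 0 \<le> p n \<and> p n \<le> 1"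
      and "eventually (\<lambda>n. p n * real n \<ge> 10^17) at_top"
  shows "(\<lambda>n. gnp_prob n (p n) (\<lambda>E. \<not> lemma_property n (p n) E))
           \<in> o(\<lambda>n. 1 / real n ^ 2)"
proof -
  have ev: "eventually (\<lambda>n. norm (gnp_prob n (p n) (\<lambda>E. \<not> lemma_property n (p n) E))
              \<le> 1 * norm (exp (- real n))) at_top"
    using assms(2)
  proof eventually_elim
    case (elim n)
    have p: "0 \<le> p n" "p n \<le> 1" using assms(1) by auto
    show ?case using gnp_bound[OF p elim] gnp_nonneg[OF p] by simp
  qed
  have "(\<lambda>n. gnp_prob n (p n) (\<lambda>E. \<not> lemma_property n (p n) E)) \<in> O(\<lambda>n. exp (- real n))"
    using ev by (rule bigoI)
  moreover have "(\<lambda>n. exp (- real n)) \<in> o(\<lambda>n. 1 / real n ^ 2)" by real_asymp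
  ultimately show ?thesis by (rule landau_o.big_small_trans)
qed

end
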